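(* Consider the optimization problem \[ \min_{d,\{t_n\},\{P_n\},\{Q_n\}} \ \sum_{n=1}^N (P_n t_n + Q_n t_n) + \frac{\kappa L^3 (D-d)^3}{T^2} \] subject to \[ d \le \sum_{n=1}^N D_n^T,\qquad 2\sum_{n=1}^N t_n \le T - \frac{Ld}{f_B},\qquad 0\le d\le D,\quad P_n\ge 0,\ Q_n\ge 0,\ t_n\ge 0\ \ \forall n\in\{1,\dots,N\}, \] where \[ D_n^T = \min\left( t_n W \ln\left(1+\frac{P_n h_n}{\sigma^2 W}\right),\ t_n W\ln\left(1+\frac{Q_n g_n}{\sigma^2 W}\right)\right). \] Then the optimal $P_n$ and $Q_n$ satisfy $P_n h_n = Q_n g_n$ for all $n\in\{1,\dots,N\}$.
   Context: This models a mobile edge computing system with one mobile device, $N$ decode-and-forward relays operating in time-division multiple access, and a base station. All parameters are given positive constants: $N$ (number of relays), $h_n$ (channel gain from the device to relay $n$), $g_n$ (channel gain from relay $n$ to the base station), $W$ (bandwidth), $\sigma^2$ (noise power spectral density), $\kappa$, $L$, $D$, $T$, and $f_B$. The variables are $d$ (offloaded data), $t_n$ (time slot of relay $n$), $P_n$ (device transmit power to relay $n$), and $Q_n$ (transmit power of relay $n$). *)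

theory Defs
  imports Complex_Main
begin

text \<open>Data offloaded through relay n in its TDMA slot (decode-and-forward: min of the two hops).\<close>
definition DT :: "real \<Rightarrow> real \<Rightarrow> real \<Rightarrow> real \<Rightarrow> real \<Rightarrow> real \<Rightarrow> real \<Rightarrow> real" where
  "DT W \<sigma>2 hn gn tn Pn Qn =
     min (tn * W * ln (1 + Pn * hn / (\<sigma>2 * W))) (tn * W * ln (1 + Qn * gn / (\<sigma>2 * W)))"

definition objective :: "nat \<Rightarrow> real \<Rightarrow> real \<Rightarrow> real \<Rightarrow> real
    \<Rightarrow> real \<Rightarrow> (nat \<Rightarrow> real) \<Rightarrow> (nat \<Rightarrow> real) \<Rightarrow> (nat \<Rightarrow> real) \<Rightarrow> real" where
  "objective N \<kappa> L D T d t P Q =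
     (\<Sum>n=1..N. P n * t n + Q n * t n) + \<kappa> * L ^ 3 * (D - d) ^ 3 / T ^ 2"

definition feasible :: "nat \<Rightarrow> (nat \<Rightarrow> real) \<Rightarrow> (nat \<Rightarrow> real) \<Rightarrow> real \<Rightarrow> real \<Rightarrow> real \<Rightarrow> real
    \<Rightarrow> real \<Rightarrow> real \<Rightarrow> real \<Rightarrow> (nat \<Rightarrow> real) \<Rightarrow> (nat \<Rightarrow> real) \<Rightarrow> (nat \<Rightarrow> real) \<Rightarrow> bool" where
  "feasible N h g W \<sigma>2 L D T fB d t P Q \<longleftrightarrow>
     d \<le> (\<Sum>n=1..N. DT W \<sigma>2 (h n) (g n) (t n) (P n) (Q n)) \<and>
     2 * (\<Sum>n=1..N. t n) \<le> T - L * d / fB \<and>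
     0 \<le> d \<and> d \<le> D \<and>
     (\<forall>n\<in>{1..N}. 0 \<le> P n \<and> 0 \<le> Q n \<and> 0 \<le> t n)"

definition optimal :: "nat \<Rightarrow> (nat \<Rightarrow> real) \<Rightarrow> (nat \<Rightarrow> real) \<Rightarrow> real \<Rightarrow> real \<Rightarrow> real \<Rightarrow> real \<Rightarrow> real
    \<Rightarrow> real \<Rightarrow> real \<Rightarrow> real \<Rightarrow> (nat \<Rightarrow> real) \<Rightarrow> (nat \<Rightarrow> real) \<Rightarrow> (nat \<Rightarrow> real) \<Rightarrow> bool" where
  "optimal N h g W \<sigma>2 \<kappa> L D T fB d t P Q \<longleftrightarrow>
     feasible N h g W \<sigma>2 L D T fB d t P Q \<and>
     (\<forall>d' t' P' Q'. feasible N h g W \<sigma>2 L D T fB d' t' P' Q' \<longrightarrow>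
        objective N \<kappa> L D T d t P Q \<le> objective N \<kappa> L D T d' t' P' Q')"

end

theory Submission
  imports Defs
begin

lemma sum_upd_less:
  fixes f f' :: "nat \<Rightarrow> real"
  assumes "n \<in> {1..N}" "\<forall>k. k \<noteq> n \<longrightarrow> f' k = f k" "f' n < f n"
  shows "(\<Sum>k=1..N. f' k) < (\<Sum>k=1..N. f k)"
proof -
  have "(\<Sum>k=1..N. f' k) = f' n + (\<Sum>k\<in>{1..N}-{n}. f' k)"
    using assms(1) by (simp add: sum.remove)
  also have "(\<Sum>k\<in>{1..N}-{n}. f' k) = (\<Sum>k\<in>{1..N}-{n}. f k)"
    using assms(2) by (intro sum.cong) auto
  also have "f' n + (\<Sum>k\<in>{1..N}-{n}. f k) < f n + (\<Sum>k\<in>{1..N}-{n}. f k)"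
    using assms(3) by simp
  also have "\<dots> = (\<Sum>k=1..N. f k)"
    using assms(1) by (simp add: sum.remove)
  finally show ?thesis .
qed

theorem lemma1:
  fixes N :: nat and h g t P Q :: "nat \<Rightarrow> real"
    and W \<sigma>2 \<kappa> L D T fB d :: real
  assumes "N > 0"
    and "\<forall>n\<in>{1..N}. h n > 0 \<and> g n > 0"
    and "W > 0" and "\<sigma>2 > 0" and "\<kappa> > 0" and "L > 0" and "D > 0" and "T > 0" and "fB > 0"
    and "optimal N h g W \<sigma>2 \<kappa> L D T fB d t P Q"
  shows "\<forall>n\<in>{1..N}. t n > 0 \<longrightarrow> P n * h n = Q n * g n"
proof (intro ballI impI)
  fix n assume n: "n \<in> {1..N}" and tn: "t n > 0"
  have hn: "h n > 0" and gn: "g n > 0" using assms(2) n by auto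
  have feas: "feasible N h g W \<sigma>2 L D T fB d t P Q"
    and opt: "\<And>d' t' P' Q'. feasible N h g W \<sigma>2 L D T fB d' t' P' Q' \<Longrightarrow>
        objective N \<kappa> L D T d t P Q \<le> objective N \<kappa> L D T d' t' P' Q'"
    using assms(10) unfolding optimal_def by auto
  have Pn: "P n \<ge> 0" and Qn: "Q n \<ge> 0" using feas n unfolding feasible_def by auto
  show "P n * h n = Q n * g n"
  proof (rule ccontr)
    assume ne: "P n * h n \<noteq> Q n * g n"
    show False
    proof (cases "P n * h n > Q n * g n")
      case True
      define P' where "P' = P(n := Q n * g n / h n)"
      have P'n: "P' n * h n = Q n * g n" using hn by (simp add: P'_def)
      have P'lt: "P' n < P n" using True hn by (simp add: P'_def field_simps)
      have DTle: "DT W \<sigma>2 (h k) (g k) (t k) (P k) (Q k) \<le> DT W \<sigma>2 (h k) (g k) (t k) (P' k) (Q k)" for k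
      proof (cases "k = n")
        case True
        then show ?thesis unfolding DT_def using P'n by (simp add: mult.commute)
      next
        case False
        then show ?thesis by (simp add: P'_def)
      qed
      have "feasible N h g W \<sigma>2 L D T fB d t P' Q"
        using feas unfolding feasible_def
        using sum_mono[of "{1..N}" "\<lambda>k. DT W \<sigma>2 (h k) (g k) (t k) (P k) (Q k)" "\<lambda>k. DT W \<sigma>2 (h k) (g k) (t k) (P' k) (Q k)", OF DTle] P'n hn gn Qn
        by (auto simp: P'_def zero_le_divide_iff)
      then have "objective N \<kappa> L D T d t P Q \<le> objective N \<kappa> L D T d t P' Q" by (rule opt)
      moreover have "(\<Sum>k=1..N. P' k * t k + Q k * t k) < (\<Sum>k=1..N. P k * t k + Q k * t k)"
        by (rule sum_upd_less[OF n]) (use mult_strict_right_mono[OF P'lt tn] in \<open>auto simp: P'_def simp del: fun_upd_apply\<close>, simp add: P'_def)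
      ultimately show False unfolding objective_def by simp
    next
      case False
      with ne have lt: "Q n * g n > P n * h n" by simp
      define Q' where "Q' = Q(n := P n * h n / g n)"
      have Q'n: "Q' n * g n = P n * h n" using gn by (simp add: Q'_def)
      have Q'lt: "Q' n < Q n" using lt gn by (simp add: Q'_def field_simps)
      have DTle: "DT W \<sigma>2 (h k) (g k) (t k) (P k) (Q k) \<le> DT W \<sigma>2 (h k) (g k) (t k) (P k) (Q' k)" for k
      proof (cases "k = n")
        case True
        then show ?thesis unfolding DT_def using Q'n by (simp add: mult.commute)
      next
        case False
        then show ?thesis by (simp add: Q'_def)
      qed
      have "feasible N h g W \<sigma>2 L D T fB d t P Q'"
        using feas unfolding feasible_def
        using sum_mono[of "{1..N}" "\<lambda>k. DT W \<sigma>2 (h k) (g k) (t k) (P k) (Q k)" "\<lambda>k. DT W \<sigma>2 (h k) (g k) (t k) (P k) (Q' k)", OF DTle] Q'n hn gn Pn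
        by (auto simp: Q'_def zero_le_divide_iff)
      then have "objective N \<kappa> L D T d t P Q \<le> objective N \<kappa> L D T d t P Q'" by (rule opt)
      moreover have "(\<Sum>k=1..N. P k * t k + Q' k * t k) < (\<Sum>k=1..N. P k * t k + Q k * t k)"
        by (rule sum_upd_less[OF n]) (use mult_strict_right_mono[OF Q'lt tn] in \<open>auto simp: Q'_def simp del: fun_upd_apply\<close>, simp add: Q'_def)
      ultimately show False unfolding objective_def by simp
    qed
  qed
qed

end
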